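(* Let $(\lambda_k)_{k\ge0}$ be a sequence of positive numbers, $\tau_0=0$ and $\tau_k=\sum_{i=0}^{k-1}\lambda_i$ for $k\ge1$. Suppose there exist $C_2>0$ and $a,b,c\ge0$ with $b+c>a$ such that $$\sum_{k\ge0}\tau_k^a\lambda_k^{-b}\lambda_{k+1}^{-c}\le C_2<+\infty$$ (with the convention $\tau_0^0=1$). Then there exists $C_3>0$ such that $\tau_{k+1}\ge C_3\,k^{\frac{b+c+1}{b+c-a}}$ for every $k\ge1$. *)

theory Defs
  imports "HOL-Analysis.Analysis"
begin

definition tau :: "(nat \<Rightarrow> real) \<Rightarrow> nat \<Rightarrow> real" where
  "tau lam k = (\<Sum>i<k. lam i)"

definition pw :: "real \<Rightarrow> real \<Rightarrow> real" where
  "pw x a = (if a = 0 then 1 else x powr a)"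

end

theory Submission imports Defs begin

lemma tangent_neg_powr:
  fixes s x M :: real
  assumes "s \<ge> 0" "x > 0" "M > 0"
  shows "M powr (-s) - s * M powr (-s-1) * (x - M) \<le> x powr (-s)"
proof -
  have "(- s * M powr (-s-1)) * (x - M) \<le> x powr (-s) - M powr (-s)"
  proof (rule f''_imp_f'[where C="{0<..}" and f="\<lambda>x. x powr (-s)"
        and f'="\<lambda>x. - s * x powr (-s-1)" and f''="\<lambda>x. s * (s+1) * x powr (-s-2)"])
    show "convex {0::real<..}" by simp
    show "((\<lambda>x. x powr (-s)) has_real_derivative - s * x powr (-s-1)) (at x)" if "x \<in> {0<..}" for x
      using that by (auto intro!: derivative_eq_intros)
    show "((\<lambda>x. - s * x powr (-s-1)) has_real_derivative s * (s+1) * x powr (-s-2)) (at x)" if "x \<in> {0<..}" for x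
      using that by (auto intro!: derivative_eq_intros simp: algebra_simps)
    show "0 \<le> s * (s+1) * x powr (-s-2)" if "x \<in> {0<..}" for x
      using assms by simp
  qed (use assms in auto)
  then show ?thesis by (simp add: algebra_simps)
qed

lemma power_mean_neg:
  fixes u :: "nat \<Rightarrow> real" and s :: real
  assumes "finite I" "I \<noteq> {}" "\<And>i. i \<in> I \<Longrightarrow> u i > 0" "s \<ge> 0"
  shows "real (card I) powr (1+s) * (\<Sum>i\<in>I. u i) powr (-s) \<le> (\<Sum>i\<in>I. u i powr (-s))"
proof -
  define n where "n = real (card I)"
  define S where "S = (\<Sum>i\<in>I. u i)"
  have n0: "n > 0" using assms by (simp add: n_def card_gt_0_iff)
  have S0: "S > 0" unfolding S_def using assms by (intro sum_pos) auto
  define M where "M = S / n"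
  have M0: "M > 0" using n0 S0 by (simp add: M_def)
  have "(\<Sum>i\<in>I. M powr (-s) - s * M powr (-s-1) * (u i - M)) \<le> (\<Sum>i\<in>I. u i powr (-s))"
    by (intro sum_mono tangent_neg_powr) (use assms M0 in auto)
  moreover have "(\<Sum>i\<in>I. M powr (-s) - s * M powr (-s-1) * (u i - M)) = n * M powr (-s)"
  proof -
    have "(\<Sum>i\<in>I. M powr (-s) - s * M powr (-s-1) * (u i - M))
       = n * M powr (-s) - s * M powr (-s-1) * (S - n * M)"
      by (simp add: sum_subtractf sum_distrib_left[symmetric] sum_distrib_right[symmetric] S_def n_def algebra_simps)
    also have "S - n * M = 0" using n0 by (simp add: M_def)
    finally show ?thesis by simp
  qed
  moreover have "n * M powr (-s) = n powr (1+s) * S powr (-s)"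
    using n0 S0 by (simp add: M_def powr_divide powr_add powr_minus field_simps)
  ultimately show ?thesis by (simp add: n_def S_def)
qed

theorem mainTheorem12:
  fixes lam :: "nat \<Rightarrow> real" and a b c C2 :: real
  assumes pos: "\<And>k. lam k > 0"
    and C2pos: "C2 > 0"
    and abc: "a \<ge> 0" "b \<ge> 0" "c \<ge> 0" "b + c > a"
    and summ: "summable (\<lambda>k. pw (tau lam k) a * lam k powr (-b) * lam (Suc k) powr (-c))"
    and bound: "(\<Sum>k. pw (tau lam k) a * lam k powr (-b) * lam (Suc k) powr (-c)) \<le> C2"
  shows "\<exists>C3 > 0. \<forall>k \<ge> 1. tau lam (Suc k) \<ge> C3 * real k powr ((b + c + 1) / (b + c - a))"
proof -
  define s where "s = b + c"
  define p where "p = (s + 1) / (s - a)"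
  define f where "f = (\<lambda>k. pw (tau lam k) a * lam k powr (-b) * lam (Suc k) powr (-c))"
  define T where "T = tau lam"
  have s0: "s > 0" "s > a" using abc by (auto simp: s_def)
  have p0: "p > 0" using s0 by (simp add: p_def)
  have pid: "p * a + (1 + s) = p * s"
  proof -
    have "p * (s - a) = s + 1" using s0 by (simp add: p_def)
    then show ?thesis by (simp add: algebra_simps)
  qed
  have Tmono: "T i \<le> T j" if "i \<le> j" for i j
    unfolding T_def tau_def using that pos by (intro sum_mono2) (auto intro: less_imp_le)
  have Tge: "T k \<ge> lam 0" if "k \<ge> 1" for k
  proof -
    have "T 1 = lam 0" by (simp add: T_def tau_def)
    then show ?thesis using Tmono[OF that] by simp
  qed
  have Tpos: "T k > 0" if "k \<ge> 1" for k using Tge[OF that] pos[of 0] by simp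
  have f0: "f k \<ge> 0" for k unfolding f_def pw_def by auto
  have fin: "sum f I \<le> C2" if "finite I" for I
  proof -
    have "sum f I \<le> suminf f"
      using sum_le_suminf[of f I] summ that f0 by (auto simp: f_def)
    then show ?thesis using bound by (simp add: f_def)
  qed
  have term_lb: "T m powr a * (lam i + lam (Suc i)) powr (-s) \<le> f i" if "1 \<le> m" "m \<le> i" for m i
  proof -
    define u where "u = lam i + lam (Suc i)"
    have u0: "lam i \<le> u" "lam (Suc i) \<le> u" "u > 0" using pos[of i] pos[of "Suc i"] by (auto simp: u_def)
    have "pw (T i) a = T i powr a" using Tpos[of i] that by (simp add: pw_def)
    moreover have "T m powr a \<le> T i powr a"
      using Tpos[of m] that Tmono[of m i] abc by (intro powr_mono2) auto
    moreover have "u powr (-b) \<le> lam i powr (-b)"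
      using u0 pos[of i] abc by (intro powr_mono2') auto
    moreover have "u powr (-c) \<le> lam (Suc i) powr (-c)"
      using u0 pos[of "Suc i"] abc by (intro powr_mono2') auto
    moreover have "u powr (-s) = u powr (-b) * u powr (-c)"
      by (simp add: s_def powr_add[symmetric])
    ultimately have "T m powr a * (u powr (-b) * u powr (-c)) \<le> T i powr a * (lam i powr (-b) * lam (Suc i) powr (-c))"
      by (intro mult_mono) (auto intro!: mult_mono)
    then show ?thesis unfolding f_def T_def[symmetric] u_def[symmetric]
      using \<open>pw (T i) a = T i powr a\<close> \<open>u powr (-s) = _\<close> by (simp add: mult.assoc)
  qed
  have step: "T m powr a * real (j - m) powr (1 + s) \<le> C2 * (2 * T (Suc j)) powr s"
    if "1 \<le> m" "m < j" for m j
  proof -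
    define I where "I = {m..<j}"
    define u where "u = (\<lambda>i. lam i + lam (Suc i))"
    have I: "finite I" "I \<noteq> {}" "card I = j - m" using that by (auto simp: I_def)
    have upos: "u i > 0" for i using pos[of i] pos[of "Suc i"] by (simp add: u_def)
    have S1: "(\<Sum>i\<in>I. lam i) \<le> T (Suc j)"
      unfolding T_def tau_def I_def using pos by (intro sum_mono2) (auto intro: less_imp_le)
    have "(\<Sum>i\<in>I. lam (Suc i)) = (\<Sum>i\<in>{Suc m..<Suc j}. lam i)"
      unfolding I_def by (rule sum.shift_bounds_Suc_ivl[symmetric])
    also have "\<dots> \<le> T (Suc j)"
      unfolding T_def tau_def using pos by (intro sum_mono2) (auto intro: less_imp_le)
    finally have S2: "(\<Sum>i\<in>I. lam (Suc i)) \<le> T (Suc j)" .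
    have Su: "(\<Sum>i\<in>I. u i) \<le> 2 * T (Suc j)"
      using S1 S2 by (simp add: u_def sum.distrib)
    have Su0: "(\<Sum>i\<in>I. u i) > 0" using I upos by (intro sum_pos) auto
    have Tm: "T m powr a \<ge> 0" by simp
    have "T m powr a * (real (j - m) powr (1 + s) * (2 * T (Suc j)) powr (-s))
        \<le> T m powr a * (real (card I) powr (1+s) * (\<Sum>i\<in>I. u i) powr (-s))"
    proof -
      have "(2 * T (Suc j)) powr (-s) \<le> (\<Sum>i\<in>I. u i) powr (-s)"
        using Su Su0 s0 by (intro powr_mono2') auto
      then show ?thesis using I(3) by (intro mult_left_mono) (auto intro!: mult_left_mono)
    qed
    also have "\<dots> \<le> T m powr a * (\<Sum>i\<in>I. u i powr (-s))"
      using power_mean_neg[OF I(1,2), of u s] upos s0 by (intro mult_left_mono) auto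
    also have "\<dots> = (\<Sum>i\<in>I. T m powr a * u i powr (-s))" by (simp add: sum_distrib_left)
    also have "\<dots> \<le> sum f I"
      using that by (intro sum_mono) (auto simp: I_def u_def intro!: term_lb)
    also have "\<dots> \<le> C2" using fin I by simp
    finally have "T m powr a * real (j - m) powr (1 + s) * (2 * T (Suc j)) powr (-s) \<le> C2"
      by (simp add: mult.assoc)
    moreover have "(2 * T (Suc j)) powr s > 0" using Tpos[of "Suc j"] by simp
    ultimately show ?thesis
      by (simp add: powr_minus divide_simps)
  qed
  define D where "D = (1/3) powr (p*a) * (1/4) powr (1+s) / (2 powr s * C2)"
  have D0: "D > 0" using C2pos by (simp add: D_def)
  define C where "C = min (lam 0 / 3 powr p) (D powr (1/(s-a)))"
  have C0: "C > 0" using D0 pos[of 0] by (simp add: C_def)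
  have CD: "C powr (s - a) \<le> D"
  proof -
    have "C powr (s - a) \<le> (D powr (1/(s-a))) powr (s - a)"
      using C0 s0 by (intro powr_mono2) (auto simp: C_def)
    also have "\<dots> = D" using s0 D0 by (simp add: powr_powr)
    finally show ?thesis .
  qed
  have main: "T k \<ge> C * real k powr p" if "k \<ge> 1" for k
    using that
  proof (induction k rule: less_induct)
    case (less k)
    show ?case
    proof (cases "k \<le> 3")
      case True
      have "C * real k powr p \<le> (lam 0 / 3 powr p) * 3 powr p"
        using True less.prems C0 p0 by (intro mult_mono powr_mono2) (auto simp: C_def)
      also have "\<dots> = lam 0" by simp
      finally show ?thesis using Tge[OF less.prems] by simp
    next
      case False
      define m where "m = k div 2"
      define j where "j = k - 1"
      have m1: "1 \<le> m" "m < k" "m < j" using False by (auto simp: m_def j_def)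
      have mk: "real m \<ge> real k / 3" using False unfolding m_def by linarith
      have nk: "real (j - m) \<ge> real k / 4" using False unfolding m_def j_def by linarith
      have Sj: "Suc j = k" using False by (simp add: j_def)
      have A: "T m powr a * real (j - m) powr (1 + s) \<le> C2 * (2 * T k) powr s"
        using step[OF m1(1) m1(3)] Sj by simp
      have IH: "C * real m powr p \<le> T m" using less.IH[OF m1(2) m1(1)] .
      have B: "(C * real m powr p) powr a \<le> T m powr a"
        using IH C0 abc by (intro powr_mono2) auto
      have B': "(C * real m powr p) powr a = C powr a * real m powr (p * a)"
        using C0 by (simp add: powr_mult powr_powr)
      have B'': "real m powr (p * a) \<ge> real k powr (p * a) * (1/3) powr (p * a)"
      proof -
        have "real k powr (p * a) * (1/3) powr (p * a) = (real k / 3) powr (p * a)"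
          by (simp add: powr_mult[symmetric])
        also have "\<dots> \<le> real m powr (p * a)"
          using mk p0 abc by (intro powr_mono2) auto
        finally show ?thesis .
      qed
      have E: "real (j - m) powr (1 + s) \<ge> real k powr (1 + s) * (1/4) powr (1 + s)"
      proof -
        have "real k powr (1 + s) * (1/4) powr (1 + s) = (real k / 4) powr (1 + s)"
          by (simp add: powr_mult[symmetric])
        also have "\<dots> \<le> real (j - m) powr (1 + s)"
          using nk s0 by (intro powr_mono2) auto
        finally show ?thesis .
      qed
      have "C powr a * (real k powr (p * a) * (1/3) powr (p * a)) * (real k powr (1 + s) * (1/4) powr (1 + s))
          \<le> T m powr a * real (j - m) powr (1 + s)"
      proof (rule mult_mono)
        have "C powr a * (real k powr (p * a) * (1/3) powr (p * a)) \<le> C powr a * real m powr (p * a)"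
          using B'' by (intro mult_left_mono) auto
        then show "C powr a * (real k powr (p * a) * (1/3) powr (p * a)) \<le> T m powr a"
          using B B' by linarith
      qed (use E in auto)
      also have "\<dots> \<le> C2 * (2 * T k) powr s" by (rule A)
      also have "\<dots> = C2 * 2 powr s * T k powr s"
        using Tpos[OF less.prems] by (simp add: powr_mult)
      finally have F: "C powr a * (real k powr (p * a) * (1/3) powr (p * a)) * (real k powr (1 + s) * (1/4) powr (1 + s))
          \<le> C2 * 2 powr s * T k powr s" .
      have kk: "real k powr (p * a) * real k powr (1 + s) = real k powr (p * s)"
        by (simp add: powr_add[symmetric] pid)
      have G: "C powr a * D * real k powr (p * s) \<le> T k powr s"
      proof -
        have "C powr a * D * real k powr (p * s) * (2 powr s * C2)
            = C powr a * (real k powr (p * a) * (1/3) powr (p * a)) * (real k powr (1 + s) * (1/4) powr (1 + s))"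
          using C2pos by (simp add: D_def kk[symmetric] field_simps)
        also have "\<dots> \<le> T k powr s * (2 powr s * C2)" using F by (simp add: mult_ac)
        finally show ?thesis using C2pos by (simp add: mult_le_cancel_right)
      qed
      have H: "C powr s \<le> C powr a * D"
      proof -
        have "C powr s = C powr a * C powr (s - a)" by (simp add: powr_add[symmetric])
        also have "\<dots> \<le> C powr a * D" using CD by (intro mult_left_mono) auto
        finally show ?thesis .
      qed
      have "(C * real k powr p) powr s = C powr s * real k powr (p * s)"
        using C0 by (simp add: powr_mult powr_powr)
      also have "\<dots> \<le> C powr a * D * real k powr (p * s)"
        using H by (intro mult_right_mono) auto
      also have "\<dots> \<le> T k powr s" by (rule G)
      finally have "(C * real k powr p) powr s \<le> T k powr s" .
      then show ?thesis
        using Tpos[OF less.prems] s0 C0 powr_less_mono2[of s "T k" "C * real k powr p"]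
        by (meson not_le less_imp_le)
    qed
  qed
  show ?thesis
  proof (intro exI[of _ C] conjI allI impI)
    show "C > 0" by (rule C0)
    fix k :: nat assume "k \<ge> 1"
    have "C * real k powr p \<le> T k" by (rule main[OF \<open>k \<ge> 1\<close>])
    also have "\<dots> \<le> T (Suc k)" by (rule Tmono) simp
    finally show "C * real k powr ((b + c + 1) / (b + c - a)) \<le> tau lam (Suc k)"
      by (simp add: T_def p_def s_def)
  qed
qed

end
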